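(* Let $\mathbf U$ be a real $3\times3$ positive-definite symmetric matrix, $|\hat{\mathbf e}|=1$, $\hat{\mathbf U}=(-\mathbf I+2\hat{\mathbf e}\otimes\hat{\mathbf e})\mathbf U(-\mathbf I+2\hat{\mathbf e}\otimes\hat{\mathbf e})$, and let $\hat{\mathbf R}\in\mathrm{SO}(3)$, nonzero $\mathbf a,\mathbf n\in\mathbb R^3$ satisfy $\hat{\mathbf R}\hat{\mathbf U}=\mathbf U+\mathbf a\otimes\mathbf n$. Suppose the cofactor conditions hold: (CC1) the middle eigenvalue of $\mathbf U$ equals $1$; (CC2) $\mathbf a\cdot\mathbf U\,\mathrm{cof}(\mathbf U^2-\mathbf I)\mathbf n=0$; (CC3) $\mathrm{tr}\,\mathbf U^2-\det\mathbf U^2-\frac{|\mathbf a|^2|\mathbf n|^2}{4}-2\ge0$. For $f\in[0,1]$ let $\mathbf C_f=(\mathbf U+f\,\mathbf n\otimes\mathbf a)(\mathbf U+f\,\mathbf a\otimes\mathbf n)$, with middle eigenvalue $1$ and other eigenvalues $\lambda_1(f)^2\le1\le\lambda_3(f)^2$ ($\lambda_1(f),\lambda_3(f)>0$), and let $\mathbf v_1(f),\mathbf v_3(f)$ be orthonormal eigenvectors of $\mathbf C_f$ for $\lambda_1(f)^2,\lambda_3(f)^2$. Then for each $f\in[0,1]$ with $f\neq1/2$ there are two distinct solutions $(\mathbf R_f^\kappa\in\mathrm{SO}(3),\ \mathbf b_f^\kappa\otimes\mathbf m_f^\kappa)$, $\kappa\in\{\pm1\}$, of $$\mathbf R\big[f(\mathbf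 U+\mathbf a\otimes\mathbf n)+(1-f)\mathbf U\big]-\mathbf I=\mathbf b\otimes\mathbf m,$$ and these are given by $$\mathbf b_f^\kappa=\frac{\rho}{\sqrt{\lambda_3(f)^2-\lambda_1(f)^2}}\Big(\lambda_3(f)\sqrt{1-\lambda_1(f)^2}\,\mathbf v_1(f)+\kappa\,\lambda_1(f)\sqrt{\lambda_3(f)^2-1}\,\mathbf v_3(f)\Big),$$ $$\mathbf m_f^\kappa=\frac1\rho\,\frac{\lambda_3(f)-\lambda_1(f)}{\sqrt{\lambda_3(f)^2-\lambda_1(f)^2}}\Big(-\sqrt{1-\lambda_1(f)^2}\,\mathbf v_1(f)+\kappa\sqrt{\lambda_3(f)^2-1}\,\mathbf v_3(f)\Big),$$ for $\kappa\in\{\pm1\}$ and some $\rho\neq0$ (which does not affect $\mathbf b_f^\kappa\otimes\mathbf m_f^\kappa$).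
   Context: $\mathbf a\otimes\mathbf n$ is the matrix $\mathbf x\mapsto(\mathbf n\cdot\mathbf x)\mathbf a$; $\mathrm{cof}\,\mathbf A$ is the cofactor matrix of $\mathbf A$. Solutions are distinguished by the pair $(\mathbf R,\mathbf b\otimes\mathbf m)$. *)

theory Defs
  imports "HOL-Analysis.Analysis"
begin

definition outer :: "real^3 \<Rightarrow> real^3 \<Rightarrow> real^3^3" where
  "outer a n = (\<chi> i j. a $ i * n $ j)"

text \<open>Cofactor matrix of a 3x3 matrix (cyclic index formula; indices of type 3 wrap mod 3).\<close>
definition cof :: "real^3^3 \<Rightarrow> real^3^3" where
  "cof A = (\<chi> i j. A $ (i+1) $ (j+1) * A $ (i+2) $ (j+2) - A $ (i+1) $ (j+2) * A $ (i+2) $ (j+1))"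

definition SO3 :: "(real^3^3) set" where
  "SO3 = {R. orthogonal_matrix R \<and> det R = 1}"

definition pos_def_sym :: "real^3^3 \<Rightarrow> bool" where
  "pos_def_sym U \<longleftrightarrow> transpose U = U \<and> (\<forall>x. x \<noteq> 0 \<longrightarrow> x \<bullet> (U *v x) > 0)"

definition middle_eigenvalue :: "real^3^3 \<Rightarrow> real \<Rightarrow> bool" where
  "middle_eigenvalue A mu \<longleftrightarrow> (\<exists>e1 e2 e3 l1 l3.
     norm e1 = 1 \<and> norm e2 = 1 \<and> norm e3 = 1 \<and>
     e1 \<bullet> e2 = 0 \<and> e1 \<bullet> e3 = 0 \<and> e2 \<bullet> e3 = 0 \<and>
     A *v e1 = l1 *\<^sub>R e1 \<and> A *v e2 = mu *\<^sub>R e2 \<and> A *v e3 = l3 *\<^sub>R e3 \<and>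
     l1 \<le> mu \<and> mu \<le> l3)"

end

theory Submission
  imports Defs
begin

lemma idx3 [simp]: "(4::3) = 1" "(5::3) = 2" by simp_all

definition orthon :: "real^3 \<Rightarrow> real^3 \<Rightarrow> real^3 \<Rightarrow> bool" where
 "orthon v1 v2 v3 \<longleftrightarrow> v1\<bullet>v1 = 1 \<and> v2\<bullet>v2 = 1 \<and> v3\<bullet>v3 = 1 \<and> v1\<bullet>v2 = 0 \<and> v1\<bullet>v3 = 0 \<and> v2\<bullet>v3 = 0"

definition fr :: "real^3 \<Rightarrow> real^3 \<Rightarrow> real^3 \<Rightarrow> real^3^3" where
 "fr v1 v2 v3 = vector [v1, v2, v3]"

lemma fr_PPt: assumes "orthon v1 v2 v3" shows "fr v1 v2 v3 ** transpose (fr v1 v2 v3) = mat 1"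
  using assms unfolding orthon_def fr_def
  by (simp add: matrix_matrix_mult_def transpose_def mat_def vec_eq_iff forall_3 sum_3 inner_vec_def
       mult.commute)

lemma fr_PtP: assumes "orthon v1 v2 v3" shows "transpose (fr v1 v2 v3) ** fr v1 v2 v3 = mat 1"
  using fr_PPt[OF assms] matrix_left_right_inverse by blast

lemma frame_expand: assumes "orthon v1 v2 v3"
  shows "w = (w\<bullet>v1) *\<^sub>R v1 + (w\<bullet>v2) *\<^sub>R v2 + (w\<bullet>v3) *\<^sub>R v3"
proof -
  let ?P = "fr v1 v2 v3"
  have "w = (transpose ?P ** ?P) *v w" using fr_PtP[OF assms] by simp
  also have "\<dots> = (w\<bullet>v1) *\<^sub>R v1 + (w\<bullet>v2) *\<^sub>R v2 + (w\<bullet>v3) *\<^sub>R v3"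
    unfolding fr_def
    by (simp add: matrix_matrix_mult_def matrix_vector_mult_def transpose_def vec_eq_iff forall_3 sum_3 inner_vec_def
       algebra_simps)
  finally show ?thesis .
qed



lemma frame_mat_eq: assumes o: "orthon v1 v2 v3"
  and h: "\<And>x y. x \<in> {v1,v2,v3} \<Longrightarrow> y \<in> {v1,v2,v3} \<Longrightarrow> x \<bullet> (M *v y) = x \<bullet> (N *v y)"
  shows "M = N"
proof -
  have c: "M *v y = N *v y" if "y \<in> {v1,v2,v3}" for y
    using frame_expand[OF o, of "M *v y"] frame_expand[OF o, of "N *v y"] h[OF _ that]
    by (metis insertI1 insertI2 inner_commute)
  show ?thesis
  proof (rule matrix_eq[THEN iffD2], intro allI)
    fix w
    have "M *v w = M *v ((w\<bullet>v1) *\<^sub>R v1 + (w\<bullet>v2) *\<^sub>R v2 + (w\<bullet>v3) *\<^sub>R v3)"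
      using frame_expand[OF o, of w] by simp
    also have "\<dots> = (w\<bullet>v1) *\<^sub>R (M *v v1) + (w\<bullet>v2) *\<^sub>R (M *v v2) + (w\<bullet>v3) *\<^sub>R (M *v v3)"
      by (simp add: matrix_vector_right_distrib matrix_vector_mult_scaleR)
    also have "\<dots> = (w\<bullet>v1) *\<^sub>R (N *v v1) + (w\<bullet>v2) *\<^sub>R (N *v v2) + (w\<bullet>v3) *\<^sub>R (N *v v3)"
      using c by simp
    also have "\<dots> = N *v ((w\<bullet>v1) *\<^sub>R v1 + (w\<bullet>v2) *\<^sub>R v2 + (w\<bullet>v3) *\<^sub>R v3)"
      by (simp add: matrix_vector_right_distrib matrix_vector_mult_scaleR)
    also have "\<dots> = N *v w" using frame_expand[OF o, of w] by simp
    finally show "M *v w = N *v w" .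
  qed
qed

lemma eig_det_trace: assumes o: "orthon v1 v2 v3"
  and e1: "M *v v1 = l1 *\<^sub>R v1" and e2: "M *v v2 = l2 *\<^sub>R v2" and e3: "M *v v3 = l3 *\<^sub>R v3"
  shows "det M = l1 * l2 * l3" "trace M = l1 + l2 + l3"
proof -
  let ?P = "fr v1 v2 v3"
  define D :: "real^3^3" where "D = (\<chi> i j. if i = j then (vector [l1,l2,l3] :: real^3) $ i else 0)"
  have c1: "\<And>i. M$i$1 * v1$1 + M$i$2 * v1$2 + M$i$3 * v1$3 = v1$i * l1" using e1 by (simp add: vec_eq_iff matrix_vector_mult_def sum_3 mult.commute)
  have c2: "\<And>i. M$i$1 * v2$1 + M$i$2 * v2$2 + M$i$3 * v2$3 = v2$i * l2" using e2 by (simp add: vec_eq_iff matrix_vector_mult_def sum_3 mult.commute)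
  have c3: "\<And>i. M$i$1 * v3$1 + M$i$2 * v3$2 + M$i$3 * v3$3 = v3$i * l3" using e3 by (simp add: vec_eq_iff matrix_vector_mult_def sum_3 mult.commute)
  have MP: "M ** transpose ?P = transpose ?P ** D"
    unfolding fr_def D_def
    by (simp add: vec_eq_iff forall_3 matrix_matrix_mult_def transpose_def sum_3 c1 c2 c3)
  have dP: "det ?P * det ?P = 1"
    using fr_PPt[OF o] by (metis det_I det_mul det_transpose)
  have dD: "det D = l1 * l2 * l3"
    unfolding D_def by (simp add: det_3)
  have "det M * det ?P = det ?P * det D"
    using arg_cong[OF MP, of det] by (simp add: det_mul)
  then have "det M * (det ?P * det ?P) = det D * (det ?P * det ?P)" by (simp add: algebra_simps)
  then show "det M = l1 * l2 * l3" using dP dD by simp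
  have "trace M = trace (M ** (transpose ?P ** ?P))" using fr_PtP[OF o] by simp
  also have "\<dots> = trace (?P ** (M ** transpose ?P))" by (metis matrix_mul_assoc trace_mul_sym)
  also have "\<dots> = trace ((?P ** transpose ?P) ** D)" by (simp add: MP matrix_mul_assoc)
  also have "\<dots> = trace D" using fr_PPt[OF o] by simp
  also have "\<dots> = l1 + l2 + l3" unfolding D_def by (simp add: trace_def sum_3)
  finally show "trace M = l1 + l2 + l3" .
qed



lemma exist_scalar:
  fixes l1 l3 rho k p q r B1 B3 M1 M3 S :: real
  assumes p: "p^2 = 1 - l1^2" and q: "q^2 = l3^2 - 1" and r: "r^2 = l3^2 - l1^2" and r0: "r > 0"
    and rho: "rho \<noteq> 0" and k: "k^2 = 1" and l: "l1 > 0" "l3 > 0"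
    and B1: "B1 = rho / r * (l3 * p)" and B3: "B3 = rho / r * (k * l1 * q)"
    and M1: "M1 = (1/rho) * (l3 - l1) / r * (- p)" and M3: "M3 = (1/rho) * (l3 - l1) / r * (k * q)"
    and S: "S = B1^2 + B3^2"
  shows "1 + 2*M1*B1 + S*M1^2 = l1^2" "1 + 2*M3*B3 + S*M3^2 = l3^2" "M1*B3 + M3*B1 + S*M1*M3 = 0"
        "B1*M1 + B3*M3 = l1*l3 - 1"
proof -
  have SS': "S = rho^2"
    using p q k r r0 unfolding S B1 B3 by (simp add: field_simps power2_eq_square) algebra
  show "1 + 2*M1*B1 + S*M1^2 = l1^2" unfolding SS' M1 B1 using rho r0 r p
    by (simp add: field_simps power2_eq_square) algebra
  show "1 + 2*M3*B3 + S*M3^2 = l3^2" unfolding SS' M3 B3 using rho r0 r q k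
    by (simp add: field_simps power2_eq_square) algebra
  show "M1*B3 + M3*B1 + S*M1*M3 = 0" unfolding SS' M1 M3 B1 B3 using rho r0 r q k p
    by (simp add: field_simps power2_eq_square)
  show "B1*M1 + B3*M3 = l1*l3 - 1" unfolding M1 M3 B1 B3 using rho r0 r q k p
    by (simp add: field_simps power2_eq_square) algebra
qed


lemma unique_scalar:
  fixes l1 l3 p q b1 b2 b3 m1 m2 m3 S :: real
  assumes l: "0 < l1" "l1 < 1" "1 < l3"
    and p: "p > 0" "p^2 = 1 - l1^2" and q: "q > 0" "q^2 = l3^2 - 1"
    and S: "S = b1^2 + b2^2 + b3^2"
    and E11: "1 + 2*m1*b1 + S*m1^2 = l1^2"
    and E22: "1 + 2*m2*b2 + S*m2^2 = 1"
    and E33: "1 + 2*m3*b3 + S*m3^2 = l3^2"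
    and E12: "m1*b2 + m2*b1 + S*m1*m2 = 0"
    and E13: "m1*b3 + m3*b1 + S*m1*m3 = 0"
    and E23: "m2*b3 + m3*b2 + S*m2*m3 = 0"
    and pos: "1 + b1*m1 + b2*m2 + b3*m3 > 0"
  shows "\<exists>k. (k = 1 \<or> k = -1) \<and> b2 = 0 \<and> m2 = 0 \<and> b1*m1 = - l3*p^2/(l3+l1) \<and>
     b1*m3 = k*p*q*l3/(l3+l1) \<and> b3*m1 = -k*p*q*l1/(l3+l1) \<and> b3*m3 = q^2*l1/(l3+l1)"
proof -
  define g1 where "g1 = b1 + S/2*m1"
  define g2 where "g2 = b2 + S/2*m2"
  define g3 where "g3 = b3 + S/2*m3"
  have e22: "m2*g2 = 0" using E22 unfolding g2_def by (simp add: algebra_simps power2_eq_square)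
  have e12: "m1*g2 + m2*g1 = 0" using E12 unfolding g1_def g2_def by (simp add: algebra_simps)
  have e11: "2*m1*g1 = l1^2 - 1" using E11 unfolding g1_def by (simp add: algebra_simps power2_eq_square)
  have e33: "2*m3*g3 = l3^2 - 1" using E33 unfolding g3_def by (simp add: algebra_simps power2_eq_square)
  have e13: "m1*g3 + m3*g1 = 0" using E13 unfolding g1_def g3_def by (simp add: algebra_simps)
  have l1sq: "l1^2 < 1" using l by (simp add: power_less_one_iff abs_less_iff)
  have l3sq: "1 < l3^2" using l by (simp add: one_less_power)
  have m1: "m1 \<noteq> 0" using e11 l1sq by auto
  have g1: "g1 \<noteq> 0" using e11 l1sq by auto
  have m3: "m3 \<noteq> 0" using e33 l3sq by auto
  have m2g2: "m2 = 0 \<and> g2 = 0"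
  proof (cases "m2 = 0")
    case True then show ?thesis using e12 m1 by simp
  next
    case False then show ?thesis using e22 e12 g1 by simp
  qed
  then have m2z: "m2 = 0" and b2z: "b2 = 0" unfolding g2_def by auto
  have key: "m1^2 * q^2 = m3^2 * p^2"
  proof -
    have "2*m1*m3*(m1*g3 + m3*g1) = 0" using e13 by simp
    then have "m1^2 * (2*m3*g3) + m3^2*(2*m1*g1) = 0" by (simp add: algebra_simps power2_eq_square)
    then show ?thesis using e11 e33 p(2) q(2) by algebra
  qed
  define k where "k = -(m3*p)/(m1*q)"
  have kk: "k^2 = 1" unfolding k_def using key m1 m3 p q by (simp add: field_simps power2_eq_square)
  then have k: "k = 1 \<or> k = -1" by (metis power2_eq_1_iff)
  have m3k: "m3 = -k*m1*q/p" unfolding k_def using m1 p q by (simp add: field_simps)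
  define tt where "tt = S/2*m1^2/p^2"
  have h1: "b1*m1 = - (p^2*(1/2+tt))"
  proof -
    have "b1*m1 = g1*m1 - S/2*m1^2" unfolding g1_def by (simp add: algebra_simps power2_eq_square)
    also have "\<dots> = (l1^2-1)/2 - tt*p^2"
    proof -
      have "g1*m1 = (l1^2-1)/2" using e11 by (simp add: algebra_simps)
      moreover have "S/2*m1^2 = tt*p^2" unfolding tt_def using p(1) by (simp add: field_simps)
      ultimately show ?thesis by simp
    qed
    finally show ?thesis by (simp add: p(2) field_simps)
  qed
  have m3sq: "m3^2 = m1^2*q^2/p^2" using key p(1) by (simp add: field_simps)
  have h3: "b3*m3 = q^2*(1/2-tt)"
  proof -
    have "b3*m3 = g3*m3 - S/2*m3^2" unfolding g3_def by (simp add: algebra_simps power2_eq_square)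
    also have "\<dots> = (l3^2-1)/2 - tt*q^2"
    proof -
      have "g3*m3 = (l3^2-1)/2" using e33 by (simp add: algebra_simps)
      moreover have "S/2*m3^2 = tt*q^2" unfolding tt_def m3sq using p(1) by (simp add: field_simps)
      ultimately show ?thesis by simp
    qed
    finally show ?thesis by (simp add: q(2) field_simps)
  qed
  have quad0: "2*tt = p^2*(1/2+tt)^2 + q^2*(1/2-tt)^2"
  proof -
    have "S*m1^2 = (b1*m1)^2 + (b3*m3)^2 * (m1^2/m3^2)"
      using S b2z m3 by (simp add: field_simps power2_eq_square)
    also have "\<dots> = (b1*m1)^2 + (b3*m3)^2 * (p^2/q^2)"
      using key m3 q(1) by (simp add: field_simps)
    finally have "S*m1^2 = (b1*m1)^2 + (b3*m3)^2 * (p^2/q^2)" .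
    then have "2*tt*p^2 = (p^2*(1/2+tt))^2 + (q^2*(1/2-tt))^2 * (p^2/q^2)"
      unfolding tt_def h1 h3 using p by (simp add: field_simps power2_eq_square)
    also have "\<dots> = p^2 * (p^2*(1/2+tt)^2 + q^2*(1/2-tt)^2)"
      using q(1) by (simp add: field_simps power2_eq_square)
    finally have "p^2 * (2*tt) = p^2 * (p^2*(1/2+tt)^2 + q^2*(1/2-tt)^2)" by (simp add: algebra_simps)
    then show ?thesis using p(1) by simp
  qed
  have quad: "(tt - (l3+l1)/(2*(l3-l1))) * (tt - (l3-l1)/(2*(l3+l1))) = 0"
  proof -
    have q0': "8*tt = p^2*(1+2*tt)^2 + q^2*(1-2*tt)^2" using quad0 by (simp add: field_simps power2_eq_square)
    have "4*(l3^2-l1^2)*tt^2 - 4*(l1^2+l3^2)*tt + (l3^2-l1^2) = 0"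
      using q0' p(2) q(2) by algebra
    then show ?thesis using l by (simp add: field_simps power2_eq_square)
  qed
  have posS: "(l1^2+l3^2)/2 - tt*(l3^2-l1^2) > 0"
    using pos h1 h3 b2z p q by (simp add: field_simps)
  have sm: "tt = (l3-l1)/(2*(l3+l1))"
  proof (rule ccontr)
    assume "tt \<noteq> (l3-l1)/(2*(l3+l1))"
    then have "tt = (l3+l1)/(2*(l3-l1))" using quad by simp
    then have "(l1^2+l3^2)/2 - tt*(l3^2-l1^2) = - l1*l3"
      using l by (simp add: field_simps power2_eq_square)
    moreover have "0 < l1*l3" using l by simp
    ultimately show False using posS by linarith
  qed
  show ?thesis
  proof (intro exI conjI)
    show "k = 1 \<or> k = -1" by (rule k)
    show "b2 = 0" "m2 = 0" by (fact b2z, fact m2z)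
    show "b1*m1 = - l3*p^2/(l3+l1)" using h1 sm l by (simp add: field_simps)
    show "b3*m3 = q^2*l1/(l3+l1)" using h3 sm l by (simp add: field_simps)
    show "b1*m3 = k*p*q*l3/(l3+l1)"
    proof -
      have "b1*m3 = (b1*m1) * (-k*q/p)" using m3k p by (simp add: field_simps)
      then show ?thesis using h1 sm l p by (simp add: field_simps power2_eq_square)
    qed
    show "b3*m1 = -k*p*q*l1/(l3+l1)"
    proof -
      have "m1 = -k*m3*p/q" using m3k kk p q by (simp add: field_simps power2_eq_square)
      then have "b3*m1 = (b3*m3) * (-k*p/q)" using q by (simp add: field_simps)
      then show ?thesis using h3 sm l q by (simp add: field_simps power2_eq_square)
    qed
  qed
qed


lemma outer_apply: "outer a n *v x = (n \<bullet> x) *\<^sub>R a"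
  by (simp add: outer_def vec_eq_iff matrix_vector_mult_def inner_vec_def sum_3 algebra_simps)

lemma outer_inner: "x \<bullet> (outer a n *v y) = (x \<bullet> a) * (n \<bullet> y)"
  by (simp add: outer_apply)

lemma transpose_outer: "transpose (outer a n) = outer n a"
  by (simp add: outer_def transpose_def vec_eq_iff)

lemma inner_transpose: fixes G :: "real^3^3" shows "x \<bullet> (transpose G *v y) = (G *v x) \<bullet> y"
  by (simp add: inner_vec_def matrix_vector_mult_def transpose_def sum_3 inner_real_def algebra_simps)

lemma Gdot: fixes G :: "real^3^3" shows "x \<bullet> ((transpose G ** G) *v y) = (G *v x) \<bullet> (G *v y)"
proof -
  have "x \<bullet> ((transpose G ** G) *v y) = x \<bullet> (transpose G *v (G *v y))"
    by (simp only: matrix_vector_mul_assoc)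
  then show ?thesis by (simp only: inner_transpose)
qed

lemma det_rank1: "det (A + outer u v) = det A + u \<bullet> (cof A *v v)"
  by (simp add: det_3 outer_def cof_def inner_vec_def sum_3 matrix_vector_mult_def algebra_simps)

lemma det_rank2: "det (A + outer u n + outer n u) = det A + u \<bullet> (cof A *v n) + n \<bullet> (cof A *v u)
   - (cross3 u n) \<bullet> (A *v cross3 u n)"
  by (simp add: det_3 outer_def cof_def inner_vec_def sum_3 matrix_vector_mult_def cross3_def vector_def algebra_simps)

lemma cof_I: "cof (mat 1) = mat 1"
  by (simp add: cof_def mat_def vec_eq_iff forall_3)

lemma det_I_outer: "det (mat 1 + outer b m) = 1 + b \<bullet> m"
  by (simp add: det_rank1 cof_I)

lemma parseval: assumes o: "orthon v1 v2 v3"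
  shows "x \<bullet> y = (x\<bullet>v1)*(y\<bullet>v1) + (x\<bullet>v2)*(y\<bullet>v2) + (x\<bullet>v3)*(y\<bullet>v3)"
proof -
  have "x \<bullet> y = x \<bullet> ((y\<bullet>v1) *\<^sub>R v1 + (y\<bullet>v2) *\<^sub>R v2 + (y\<bullet>v3) *\<^sub>R v3)"
    using frame_expand[OF o, of y] by simp
  then show ?thesis by (simp add: inner_add_right algebra_simps)
qed

lemma orthon_comm: assumes "orthon v1 v2 v3"
  shows "v1\<bullet>v1 = 1" "v2\<bullet>v2 = 1" "v3\<bullet>v3 = 1" "v1\<bullet>v2 = 0" "v1\<bullet>v3 = 0" "v2\<bullet>v3 = 0"
    "v2\<bullet>v1 = 0" "v3\<bullet>v1 = 0" "v3\<bullet>v2 = 0"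
  using assms unfolding orthon_def by (auto simp: inner_commute)



definition bf :: "real \<Rightarrow> real \<Rightarrow> real \<Rightarrow> real^3 \<Rightarrow> real^3 \<Rightarrow> real \<Rightarrow> real^3" where
 "bf rho l1 l3 v1 v3 k = (rho / sqrt (l3^2 - l1^2)) *\<^sub>R
                    ((l3 * sqrt (1 - l1^2)) *\<^sub>R v1 + (k * l1 * sqrt (l3^2 - 1)) *\<^sub>R v3)"
definition mf :: "real \<Rightarrow> real \<Rightarrow> real \<Rightarrow> real^3 \<Rightarrow> real^3 \<Rightarrow> real \<Rightarrow> real^3" where
 "mf rho l1 l3 v1 v3 k = ((1 / rho) * (l3 - l1) / sqrt (l3^2 - l1^2)) *\<^sub>R
                    ((- sqrt (1 - l1^2)) *\<^sub>R v1 + (k * sqrt (l3^2 - 1)) *\<^sub>R v3)"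

lemma bf_comps: assumes o: "orthon v1 v2 v3"
  shows "bf rho l1 l3 v1 v3 k \<bullet> v1 = rho / sqrt (l3^2 - l1^2) * (l3 * sqrt (1 - l1^2))"
        "bf rho l1 l3 v1 v3 k \<bullet> v2 = 0"
        "bf rho l1 l3 v1 v3 k \<bullet> v3 = rho / sqrt (l3^2 - l1^2) * (k * l1 * sqrt (l3^2 - 1))"
        "mf rho l1 l3 v1 v3 k \<bullet> v1 = (1 / rho) * (l3 - l1) / sqrt (l3^2 - l1^2) * (- sqrt (1 - l1^2))"
        "mf rho l1 l3 v1 v3 k \<bullet> v2 = 0"
        "mf rho l1 l3 v1 v3 k \<bullet> v3 = (1 / rho) * (l3 - l1) / sqrt (l3^2 - l1^2) * (k * sqrt (l3^2 - 1))"
  using orthon_comm[OF o] unfolding bf_def mf_def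
  by (simp_all add: inner_add_left inner_diff_left inner_scaleR_left)

lemma prod_scalar:
  fixes l1 l3 rho k p q r :: real
  assumes r: "r^2 = l3^2 - l1^2" and r0: "r > 0" and rho: "rho \<noteq> 0" and l: "l1 > 0" "l3 > 0"
  shows "rho / r * (l3 * p) * ((1/rho) * (l3 - l1) / r * (- p)) = - l3*p^2/(l3+l1)"
        "rho / r * (l3 * p) * ((1/rho) * (l3 - l1) / r * (k * q)) = k*p*q*l3/(l3+l1)"
        "rho / r * (k * l1 * q) * ((1/rho) * (l3 - l1) / r * (- p)) = -k*p*q*l1/(l3+l1)"
        "rho / r * (k * l1 * q) * ((1/rho) * (l3 - l1) / r * (k * q)) = k^2*q^2*l1/(l3+l1)"
proof -
  have rr: "r * r = (l3 - l1) * (l3 + l1)" using r by (simp add: power2_eq_square algebra_simps)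
  have pos: "l3 + l1 \<noteq> 0" using l by simp
  show "rho / r * (l3 * p) * ((1/rho) * (l3 - l1) / r * (- p)) = - l3*p^2/(l3+l1)"
    using rho r0 pos rr by (simp add: field_simps power2_eq_square) algebra
  show "rho / r * (l3 * p) * ((1/rho) * (l3 - l1) / r * (k * q)) = k*p*q*l3/(l3+l1)"
    using rho r0 pos rr by (simp add: field_simps power2_eq_square) algebra
  show "rho / r * (k * l1 * q) * ((1/rho) * (l3 - l1) / r * (- p)) = -k*p*q*l1/(l3+l1)"
    using rho r0 pos rr by (simp add: field_simps power2_eq_square) algebra
  show "rho / r * (k * l1 * q) * ((1/rho) * (l3 - l1) / r * (k * q)) = k^2*q^2*l1/(l3+l1)"
    using rho r0 pos rr by (simp add: field_simps power2_eq_square) algebra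
qed



lemma Gform: "(mat 1 + outer b m) *v x = x + (m \<bullet> x) *\<^sub>R b"
  by (simp add: matrix_vector_mult_add_rdistrib outer_apply)

lemma Gdot2: "((mat 1 + outer b m) *v x) \<bullet> ((mat 1 + outer b m) *v y) =
   x \<bullet> y + (m\<bullet>y) * (x\<bullet>b) + (m\<bullet>x) * (b\<bullet>y) + (m\<bullet>x)*(m\<bullet>y)*(b\<bullet>b)"
  by (simp add: Gform outer_apply inner_add_left inner_add_right algebra_simps inner_commute)

lemma BJ_setup:
  fixes Fm C :: "real^3^3" and v1 v2 v3 :: "real^3"
  assumes o: "orthon v1 v2 v3" and CF: "transpose Fm ** Fm = C"
    and e1: "C *v v1 = l1^2 *\<^sub>R v1" and e2: "C *v v2 = v2" and e3: "C *v v3 = l3^2 *\<^sub>R v3"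
    and l: "0 < l1" "l1 < 1" "1 < l3" and dF: "det Fm > 0" and rho: "rho \<noteq> 0"
    and k: "k = 1 \<or> k = -1"
  shows "\<exists>R. R \<in> SO3 \<and> R ** Fm - mat 1 = outer (bf rho l1 l3 v1 v3 k) (mf rho l1 l3 v1 v3 k)"
proof -
  define p where "p = sqrt (1 - l1^2)"
  define q where "q = sqrt (l3^2 - 1)"
  define r where "r = sqrt (l3^2 - l1^2)"
  have l1s: "l1^2 < 1" using l by (simp add: power_less_one_iff abs_less_iff)
  have l3s: "1 < l3^2" using l by (simp add: one_less_power)
  have p2: "p^2 = 1 - l1^2" unfolding p_def using l1s by simp
  have q2: "q^2 = l3^2 - 1" unfolding q_def using l3s by simp
  have r2: "r^2 = l3^2 - l1^2" unfolding r_def using l1s l3s by simp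
  have r0: "r > 0" unfolding r_def using l1s l3s by simp
  have kk: "k^2 = 1" using k by auto
  define b where "b = bf rho l1 l3 v1 v3 k"
  define m where "m = mf rho l1 l3 v1 v3 k"
  define B1 where "B1 = rho / r * (l3 * p)"
  define B3 where "B3 = rho / r * (k * l1 * q)"
  define M1 where "M1 = (1/rho) * (l3 - l1) / r * (- p)"
  define M3 where "M3 = (1/rho) * (l3 - l1) / r * (k * q)"
  have Bv: "b\<bullet>v1 = B1" "b\<bullet>v2 = 0" "b\<bullet>v3 = B3" "m\<bullet>v1 = M1" "m\<bullet>v2 = 0" "m\<bullet>v3 = M3"
    unfolding b_def m_def B1_def B3_def M1_def M3_def p_def q_def r_def using bf_comps[OF o] by auto
  have Bv': "v1\<bullet>b = B1" "v2\<bullet>b = 0" "v3\<bullet>b = B3" "v1\<bullet>m = M1" "v2\<bullet>m = 0" "v3\<bullet>m = M3"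
    using Bv by (simp_all add: inner_commute)
  have bb: "b\<bullet>b = B1^2 + B3^2" using parseval[OF o, of b b] Bv by (simp add: power2_eq_square)
  have bm: "b\<bullet>m = B1*M1 + B3*M3" using parseval[OF o, of b m] Bv by simp
  note ES = exist_scalar[OF p2 q2 r2 r0 rho kk l(1) _ B1_def B3_def M1_def M3_def refl]
  have l30: "l3 > 0" using l by simp
  note ES = ES[OF l30]
  note oc = orthon_comm[OF o]
  define G where "G = mat 1 + outer b m"
  have GG: "transpose G ** G = C"
  proof (rule frame_mat_eq[OF o])
    fix x y assume x: "x \<in> {v1,v2,v3}" and y: "y \<in> {v1,v2,v3}"
    have "x \<bullet> ((transpose G ** G) *v y) = x \<bullet> y + (m\<bullet>y) * (x\<bullet>b) + (m\<bullet>x) * (b\<bullet>y) + (m\<bullet>x)*(m\<bullet>y)*(b\<bullet>b)"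
      unfolding Gdot G_def Gdot2 ..
    also have "\<dots> = x \<bullet> (C *v y)"
      using x y ES unfolding bb
      by (auto simp: Bv Bv' oc e1 e2 e3 algebra_simps power2_eq_square)
    finally show "x \<bullet> ((transpose G ** G) *v y) = x \<bullet> (C *v y)" .
  qed
  have dG: "det G = l1 * l3" unfolding G_def det_I_outer bm using ES(4) by simp
  have "invertible Fm" using dF by (simp add: invertible_det_nz)
  then obtain Fi where Fi: "Fm ** Fi = mat 1" "Fi ** Fm = mat 1" unfolding invertible_def by blast
  define R where "R = G ** Fi"
  have RF: "R ** Fm = G" unfolding R_def by (simp add: Fi matrix_mul_assoc[symmetric])
  have "transpose R ** R = transpose Fi ** (transpose G ** G) ** Fi"
    unfolding R_def by (simp add: matrix_transpose_mul matrix_mul_assoc)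
  also have "\<dots> = transpose (Fm ** Fi) ** (Fm ** Fi)"
    unfolding GG CF[symmetric] by (simp add: matrix_transpose_mul matrix_mul_assoc)
  also have "\<dots> = mat 1" by (simp add: Fi)
  finally have RtR: "transpose R ** R = mat 1" .
  then have oR: "orthogonal_matrix R" unfolding orthogonal_matrix_def
    using matrix_left_right_inverse by blast
  have "det R * det Fm = l1 * l3" using dG RF by (metis det_mul)
  moreover have "0 < l1 * l3" using l by simp
  ultimately have "0 < det R * det Fm" by simp
  then have "det R > 0" using dF by (simp add: zero_less_mult_iff)
  then have "det R = 1" using det_orthogonal_matrix[OF oR] by auto
  then have "R \<in> SO3" using oR unfolding SO3_def by simp
  moreover have "R ** Fm - mat 1 = outer b m" using RF unfolding G_def by simp
  ultimately show ?thesis unfolding b_def m_def by blast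
qed



lemma BJ_unique:
  fixes Fm C :: "real^3^3" and v1 v2 v3 :: "real^3"
  assumes o: "orthon v1 v2 v3" and CF: "transpose Fm ** Fm = C"
    and e1: "C *v v1 = l1^2 *\<^sub>R v1" and e2: "C *v v2 = v2" and e3: "C *v v3 = l3^2 *\<^sub>R v3"
    and l: "0 < l1" "l1 < 1" "1 < l3" and dF: "det Fm > 0" and rho: "rho \<noteq> 0"
    and R: "R \<in> SO3" and RB: "R ** Fm - mat 1 = outer bb mm"
  shows "\<exists>k. (k = 1 \<or> k = -1) \<and> outer bb mm = outer (bf rho l1 l3 v1 v3 k) (mf rho l1 l3 v1 v3 k)"
proof -
  define p where "p = sqrt (1 - l1^2)"
  define q where "q = sqrt (l3^2 - 1)"
  define r where "r = sqrt (l3^2 - l1^2)"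
  have l1s: "l1^2 < 1" using l by (simp add: power_less_one_iff abs_less_iff)
  have l3s: "1 < l3^2" using l by (simp add: one_less_power)
  have p2: "p^2 = 1 - l1^2" unfolding p_def using l1s by simp
  have q2: "q^2 = l3^2 - 1" unfolding q_def using l3s by simp
  have r2: "r^2 = l3^2 - l1^2" unfolding r_def using l1s l3s by simp
  have r0: "r > 0" unfolding r_def using l1s l3s by simp
  have p0: "p > 0" unfolding p_def using l1s by simp
  have q0: "q > 0" unfolding q_def using l3s by simp
  have l30: "l3 > 0" using l by simp
  note oc = orthon_comm[OF o]
  define G where "G = mat 1 + outer bb mm"
  have RF: "R ** Fm = G" using RB unfolding G_def by (simp add: algebra_simps)
  have oR: "orthogonal_matrix R" and dR: "det R = 1" using R unfolding SO3_def by auto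
  have GG: "transpose G ** G = C"
  proof -
    have "transpose G ** G = transpose Fm ** (transpose R ** R) ** Fm"
      unfolding RF[symmetric] by (simp add: matrix_transpose_mul matrix_mul_assoc)
    then show ?thesis using oR CF unfolding orthogonal_matrix_def by simp
  qed
  define b1 where "b1 = bb\<bullet>v1"
  define b2 where "b2 = bb\<bullet>v2"
  define b3 where "b3 = bb\<bullet>v3"
  define m1 where "m1 = mm\<bullet>v1"
  define m2 where "m2 = mm\<bullet>v2"
  define m3 where "m3 = mm\<bullet>v3"
  define S where "S = bb \<bullet> bb"
  have Sd: "S = b1^2 + b2^2 + b3^2" unfolding S_def b1_def b2_def b3_def
    using parseval[OF o, of bb bb] by (simp add: power2_eq_square)
  have cc: "v1\<bullet>bb = b1" "v2\<bullet>bb = b2" "v3\<bullet>bb = b3" "mm\<bullet>v1 = m1" "mm\<bullet>v2 = m2" "mm\<bullet>v3 = m3"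
    "bb\<bullet>v1 = b1" "bb\<bullet>v2 = b2" "bb\<bullet>v3 = b3"
    unfolding b1_def b2_def b3_def m1_def m2_def m3_def by (simp_all add: inner_commute)
  have E: "x \<bullet> y + (mm\<bullet>y) * (x\<bullet>bb) + (mm\<bullet>x) * (bb\<bullet>y) + (mm\<bullet>x)*(mm\<bullet>y)*S = x \<bullet> (C *v y)" for x y
  proof -
    have "x \<bullet> ((transpose G ** G) *v y) = x \<bullet> y + (mm\<bullet>y) * (x\<bullet>bb) + (mm\<bullet>x) * (bb\<bullet>y) + (mm\<bullet>x)*(mm\<bullet>y)*(bb\<bullet>bb)"
      unfolding Gdot G_def Gdot2 ..
    then show ?thesis unfolding GG S_def by simp
  qed
  have E11: "1 + 2*m1*b1 + S*m1^2 = l1^2" using E[of v1 v1] by (simp add: cc oc e1 algebra_simps power2_eq_square)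
  have E22: "1 + 2*m2*b2 + S*m2^2 = 1" using E[of v2 v2] by (simp add: cc oc e2 algebra_simps power2_eq_square)
  have E33: "1 + 2*m3*b3 + S*m3^2 = l3^2" using E[of v3 v3] by (simp add: cc oc e3 algebra_simps power2_eq_square)
  have E12: "m1*b2 + m2*b1 + S*m1*m2 = 0" using E[of v1 v2] by (simp add: cc oc e2 algebra_simps)
  have E13: "m1*b3 + m3*b1 + S*m1*m3 = 0" using E[of v1 v3] by (simp add: cc oc e3 algebra_simps)
  have E23: "m2*b3 + m3*b2 + S*m2*m3 = 0" using E[of v2 v3] by (simp add: cc oc e3 algebra_simps)
  have "det G = det Fm" using RF dR by (metis det_mul mult_1)
  moreover have "det G = 1 + bb \<bullet> mm" unfolding G_def by (rule det_I_outer)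
  moreover have "bb \<bullet> mm = b1*m1 + b2*m2 + b3*m3" using parseval[OF o, of bb mm] cc by simp
  ultimately have pos: "1 + b1*m1 + b2*m2 + b3*m3 > 0" using dF by simp
  obtain k where k: "k = 1 \<or> k = -1" and kr: "b2 = 0" "m2 = 0" "b1*m1 = - l3*p^2/(l3+l1)"
     "b1*m3 = k*p*q*l3/(l3+l1)" "b3*m1 = -k*p*q*l1/(l3+l1)" "b3*m3 = q^2*l1/(l3+l1)"
    using unique_scalar[OF l p0 p2 q0 q2 Sd E11 E22 E33 E12 E13 E23 pos] by blast
  have kk: "k^2 = 1" using k by auto
  note PS = prod_scalar(1)[OF r2 r0 rho l(1) l30, of p] prod_scalar(2)[OF r2 r0 rho l(1) l30, of p k q]
    prod_scalar(3)[OF r2 r0 rho l(1) l30, of k q p] prod_scalar(4)[OF r2 r0 rho l(1) l30, of k q]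
  define b where "b = bf rho l1 l3 v1 v3 k"
  define m where "m = mf rho l1 l3 v1 v3 k"
  have Bv: "v1\<bullet>b = rho / r * (l3 * p)" "v2\<bullet>b = 0" "v3\<bullet>b = rho / r * (k * l1 * q)"
     "m\<bullet>v1 = (1/rho) * (l3 - l1) / r * (- p)" "m\<bullet>v2 = 0" "m\<bullet>v3 = (1/rho) * (l3 - l1) / r * (k * q)"
    unfolding b_def m_def p_def q_def r_def using bf_comps[OF o] by (auto simp: inner_commute)
  have "outer bb mm = outer b m"
  proof (rule frame_mat_eq[OF o])
    fix x y assume x: "x \<in> {v1,v2,v3}" and y: "y \<in> {v1,v2,v3}"
    show "x \<bullet> (outer bb mm *v y) = x \<bullet> (outer b m *v y)"
      using x y PS kk unfolding outer_inner by (auto simp: cc Bv kr)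
  qed
  then show ?thesis using k unfolding b_def m_def by blast
qed

lemma BJ_distinct:
  fixes v1 v2 v3 :: "real^3"
  assumes o: "orthon v1 v2 v3" and l: "0 < l1" "l1 < 1" "1 < l3" and rho: "rho \<noteq> 0"
  shows "outer (bf rho l1 l3 v1 v3 1) (mf rho l1 l3 v1 v3 1) \<noteq> outer (bf rho l1 l3 v1 v3 (-1)) (mf rho l1 l3 v1 v3 (-1))"
proof
  define p where "p = sqrt (1 - l1^2)"
  define q where "q = sqrt (l3^2 - 1)"
  define r where "r = sqrt (l3^2 - l1^2)"
  have l1s: "l1^2 < 1" using l by (simp add: power_less_one_iff abs_less_iff)
  have l3s: "1 < l3^2" using l by (simp add: one_less_power)
  have r2: "r^2 = l3^2 - l1^2" unfolding r_def using l1s l3s by simp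
  have r0: "r > 0" unfolding r_def using l1s l3s by simp
  have p0: "p > 0" unfolding p_def using l1s by simp
  have q0: "q > 0" unfolding q_def using l3s by simp
  have l30: "l3 > 0" using l by simp
  assume "outer (bf rho l1 l3 v1 v3 1) (mf rho l1 l3 v1 v3 1) = outer (bf rho l1 l3 v1 v3 (-1)) (mf rho l1 l3 v1 v3 (-1))"
  then have "v1 \<bullet> (outer (bf rho l1 l3 v1 v3 1) (mf rho l1 l3 v1 v3 1) *v v3) =
             v1 \<bullet> (outer (bf rho l1 l3 v1 v3 (-1)) (mf rho l1 l3 v1 v3 (-1)) *v v3)" by simp
  then have "rho / r * (l3 * p) * ((1/rho) * (l3 - l1) / r * (1 * q)) = rho / r * (l3 * p) * ((1/rho) * (l3 - l1) / r * ((-1) * q))"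
    unfolding outer_inner using bf_comps[OF o] unfolding p_def q_def r_def by (simp add: inner_commute)
  then have "1*p*q*l3/(l3+l1) = (-1)*p*q*l3/(l3+l1)"
    using prod_scalar(2)[OF r2 r0 rho l(1) l30, of p 1 q] prod_scalar(2)[OF r2 r0 rho l(1) l30, of p "-1" q] by simp
  then show False using p0 q0 l30 l by (simp add: field_simps)
qed



lemma transpose_add3: "transpose (A + B) = transpose A + transpose (B::real^3^3)"
  unfolding transpose_def by (rule vec_eq_iff[THEN iffD2]) (simp add: vec_eq_iff)

lemma sym_entries: assumes "transpose (U::real^3^3) = U"
  shows "U$2$1 = U$1$2" "U$3$1 = U$1$3" "U$3$2 = U$2$3"
proof -
  have "\<And>i j. U$i$j = U$j$i"
  proof -
    fix i j
    have "transpose U $ j $ i = U $ j $ i" using assms by simp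
    then show "U$i$j = U$j$i" by (simp add: transpose_def)
  qed
  then show "U$2$1 = U$1$2" "U$3$1 = U$1$3" "U$3$2 = U$2$3" by auto
qed

lemma Q_props: assumes e: "norm e = 1"
  shows "transpose (- mat 1 + 2 *\<^sub>R outer e e) = (- mat 1 + 2 *\<^sub>R outer e e :: real^3^3)"
        "(- mat 1 + 2 *\<^sub>R outer e e) ** (- mat 1 + 2 *\<^sub>R outer e e) = (mat 1 :: real^3^3)"
proof -
  have ee: "e$1*e$1 + e$2*e$2 + e$3*e$3 = 1" using e unfolding norm_eq_1 by (simp add: inner_vec_def sum_3)
  show "transpose (- mat 1 + 2 *\<^sub>R outer e e) = (- mat 1 + 2 *\<^sub>R outer e e :: real^3^3)"
    by (simp add: transpose_def outer_def mat_def vec_eq_iff forall_3 mult.commute)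
  show "(- mat 1 + 2 *\<^sub>R outer e e) ** (- mat 1 + 2 *\<^sub>R outer e e) = (mat 1 :: real^3^3)"
    apply (simp add: matrix_matrix_mult_def outer_def mat_def vec_eq_iff forall_3 sum_3)
    apply (intro conjI)
    apply (use ee in algebra)+
    done
qed

lemma C_expand0: assumes s: "U$2$1 = U$1$2" "U$3$1 = U$1$3" "U$3$2 = U$2$3"
  shows "(U + g *\<^sub>R outer n a) ** (U + g *\<^sub>R outer a n) - mat 1 =
     (U ** U - mat 1) + g *\<^sub>R (outer (U *v a) n + outer n (U *v a)) + (g^2 * (a \<bullet> a)) *\<^sub>R outer n n"
  apply (simp only: vec_eq_iff forall_3)
  apply (simp add: matrix_matrix_mult_def outer_def mat_def sum_3 matrix_vector_mult_def inner_vec_def s)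
  apply (intro conjI; simp add: algebra_simps power2_eq_square)
  done

lemma C_expand: "transpose U = U \<Longrightarrow> (U + g *\<^sub>R outer n a) ** (U + g *\<^sub>R outer a n) - mat 1 =
     (U ** U - mat 1) + g *\<^sub>R (outer (U *v a) n + outer n (U *v a)) + (g^2 * (a \<bullet> a)) *\<^sub>R outer n n"
  by (rule C_expand0[OF sym_entries])

lemma outer_lin: "outer (x + y) n = outer x n + outer y n" "outer n (x + y) = outer n x + outer n y"
  "outer (c *\<^sub>R x) n = c *\<^sub>R outer x n" "outer n (c *\<^sub>R x) = c *\<^sub>R outer n x"
  by (simp_all add: outer_def vec_eq_iff algebra_simps)

lemma cof_sym: fixes A :: "real^3^3" assumes "transpose A = A"
  shows "x \<bullet> (cof A *v y) = y \<bullet> (cof A *v x)"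
  using sym_entries[OF assms]
  by (simp add: cof_def inner_vec_def sum_3 matrix_vector_mult_def algebra_simps)

lemma trace_outer: "trace (outer x y) = x \<bullet> (y::real^3)"
  by (simp add: trace_def outer_def inner_vec_def sum_3)



lemma trace_scaleR: "trace (c *\<^sub>R (X::real^3^3)) = c * trace X"
  by (simp add: trace_def sum_3 algebra_simps)

lemma eig_shift: "M *v v = l *\<^sub>R v \<Longrightarrow> (M - mat 1) *v v = (l - 1) *\<^sub>R (v::real^3)"
  by (simp add: matrix_vector_mult_diff_rdistrib scaleR_diff_left)

lemma UU_eig: "U *v v = l *\<^sub>R v \<Longrightarrow> (U ** U) *v v = (l^2) *\<^sub>R (v::real^3)"
  by (simp add: matrix_vector_mul_assoc[symmetric] matrix_vector_mult_scaleR power2_eq_square)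

lemma U_facts:
  assumes U: "pos_def_sym U" and CC1: "middle_eigenvalue U 1"
  shows "transpose U = U" "det U > 0" "det (U ** U - mat 1) = 0"
proof -
  show "transpose U = U" using U unfolding pos_def_sym_def by simp
  obtain e1 e2 e3 l1 l3 where n: "norm e1 = 1" "norm e2 = 1" "norm e3 = 1"
    and o: "e1 \<bullet> e2 = 0" "e1 \<bullet> e3 = 0" "e2 \<bullet> e3 = 0"
    and ev: "U *v e1 = l1 *\<^sub>R e1" "U *v e2 = 1 *\<^sub>R e2" "U *v e3 = l3 *\<^sub>R e3"
    using CC1 unfolding middle_eigenvalue_def by blast
  have on: "orthon e1 e2 e3" using n o unfolding orthon_def norm_eq_1 by simp
  have "e1 \<noteq> 0" "e3 \<noteq> 0" using n by auto
  then have "e1 \<bullet> (U *v e1) > 0" "e3 \<bullet> (U *v e3) > 0" using U unfolding pos_def_sym_def by auto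
  then have l: "l1 > 0" "l3 > 0" using ev n unfolding norm_eq_1 by auto
  have "det U = l1 * 1 * l3" using eig_det_trace(1)[OF on ev] .
  then show "det U > 0" using l by simp
  have "det (U ** U - mat 1) = (l1^2 - 1) * (1^2 - 1) * (l3^2 - 1)"
    using eig_det_trace(1)[OF on eig_shift[OF UU_eig[OF ev(1)]] eig_shift[OF UU_eig[OF ev(2)]]
       eig_shift[OF UU_eig[OF ev(3)]]] .
  then show "det (U ** U - mat 1) = 0" by simp
qed



lemma transpose_diff3: "transpose (A - B) = transpose A - transpose (B::real^3^3)"
  unfolding transpose_def by (rule vec_eq_iff[THEN iffD2]) (simp add: vec_eq_iff)

lemma matrix_sub_ldistrib3: "(A::real^3^3) ** (B - C) = A ** B - A ** C"
  by (simp add: matrix_matrix_mult_def vec_eq_iff sum_3 algebra_simps)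
lemma matrix_sub_rdistrib3: "((B::real^3^3) - C) ** A = B ** A - C ** A"
  by (simp add: matrix_matrix_mult_def vec_eq_iff sum_3 algebra_simps)

lemma C_analysis:
  fixes U R_hat :: "real^3^3" and e a n :: "real^3"
  assumes U: "pos_def_sym U"
    and e: "norm e = 1"
    and R_hat: "R_hat \<in> SO3"
    and a0: "a \<noteq> 0" and n0: "n \<noteq> 0"
    and twin: "R_hat ** ((- mat 1 + 2 *\<^sub>R outer e e) ** U ** (- mat 1 + 2 *\<^sub>R outer e e))
               = U + outer a n"
    and CC1: "middle_eigenvalue U 1"
    and CC2: "a \<bullet> ((U ** cof (U ** U - mat 1)) *v n) = 0"
    and CC3: "trace (U ** U) - det (U ** U) - (norm a)\<^sup>2 * (norm n)\<^sup>2 / 4 - 2 \<ge> 0"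
  shows "det ((U + f *\<^sub>R outer n a) ** (U + f *\<^sub>R outer a n) - mat 1) = 0"
    and "f \<noteq> 1/2 \<Longrightarrow> trace ((U + f *\<^sub>R outer n a) ** (U + f *\<^sub>R outer a n))
           - det ((U + f *\<^sub>R outer n a) ** (U + f *\<^sub>R outer a n)) - 2 > 0"
    and "det (U + f *\<^sub>R outer a n) > 0"
    and "transpose (U + f *\<^sub>R outer a n) = U + f *\<^sub>R outer n a"
proof -
  note Uf = U_facts[OF U CC1]
  define Q where "Q = (- mat 1 + 2 *\<^sub>R outer e e :: real^3^3)"
  have Qt: "transpose Q = Q" and QQ: "Q ** Q = mat 1" unfolding Q_def using Q_props[OF e] by auto
  have tw: "R_hat ** (Q ** U ** Q) = U + outer a n" using twin unfolding Q_def .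
  have oR: "transpose R_hat ** R_hat = mat 1" and dR: "det R_hat = 1"
    using R_hat unfolding SO3_def orthogonal_matrix_def by auto
  have dQ: "det Q * det Q = 1" using QQ by (metis det_I det_mul)
  have trF: "transpose (U + g *\<^sub>R outer a n) = U + g *\<^sub>R outer n a" for g
    by (simp add: transpose_add3 transpose_scalar transpose_outer Uf(1))
  show "transpose (U + f *\<^sub>R outer a n) = U + f *\<^sub>R outer n a" by (rule trF)
  define A where "A = U ** U - mat 1"
  have At: "transpose A = A" unfolding A_def
    by (simp add: matrix_transpose_mul Uf(1) transpose_diff3)
  have dA: "det A = 0" unfolding A_def by (rule Uf(3))
  have C1: "(U + outer n a) ** (U + outer a n) = Q ** (U ** U) ** Q"
  proof -
    have "(U + outer n a) ** (U + outer a n) = transpose (U + outer a n) ** (U + outer a n)"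
      using trF[of 1] by simp
    also have "\<dots> = transpose (Q ** U ** Q) ** (transpose R_hat ** R_hat) ** (Q ** U ** Q)"
      unfolding tw[symmetric] by (simp add: matrix_transpose_mul matrix_mul_assoc)
    also have "\<dots> = Q ** U ** (Q ** Q) ** U ** Q"
      by (simp add: oR matrix_transpose_mul Qt Uf(1) matrix_mul_assoc)
    also have "\<dots> = Q ** (U ** U) ** Q" by (simp add: QQ matrix_mul_assoc)
    finally show ?thesis .
  qed
  define w where "w = U *v a"
  define K where "K = (a \<bullet> a) * (n \<bullet> (cof A *v n)) - cross3 w n \<bullet> (A *v cross3 w n)"
  have wc: "w \<bullet> (cof A *v n) = 0"
  proof -
    have "a \<bullet> ((U ** cof A) *v n) = a \<bullet> (transpose U *v (cof A *v n))"
      by (simp add: Uf(1) matrix_vector_mul_assoc)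
    then show ?thesis using CC2 unfolding w_def A_def[symmetric] inner_transpose by simp
  qed
  have detg: "det ((U + g *\<^sub>R outer n a) ** (U + g *\<^sub>R outer a n) - mat 1) = g^2 * K" for g
  proof -
    define u where "u = g *\<^sub>R w + (g^2 * (a \<bullet> a) / 2) *\<^sub>R n"
    have "(U + g *\<^sub>R outer n a) ** (U + g *\<^sub>R outer a n) - mat 1 = A + outer u n + outer n u"
      unfolding C_expand[OF Uf(1)] u_def A_def w_def
      by (simp add: outer_lin algebra_simps scaleR_left_distrib[symmetric])
    then have "det ((U + g *\<^sub>R outer n a) ** (U + g *\<^sub>R outer a n) - mat 1) =
       det A + u \<bullet> (cof A *v n) + n \<bullet> (cof A *v u) - (cross3 u n) \<bullet> (A *v cross3 u n)"
      by (simp add: det_rank2)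
    also have "n \<bullet> (cof A *v u) = u \<bullet> (cof A *v n)" by (rule cof_sym[OF At])
    also have "u \<bullet> (cof A *v n) = (g^2 * (a \<bullet> a) / 2) * (n \<bullet> (cof A *v n))"
      unfolding u_def by (simp add: inner_add_left wc)
    also have "cross3 u n = g *\<^sub>R cross3 w n"
      unfolding u_def by (simp add: cross_add_left cross_mult_left)
    finally show ?thesis unfolding K_def dA by (simp add: algebra_simps power2_eq_square)
  qed
  have K0: "K = 0"
  proof -
    have "Q ** (U ** U) ** Q - mat 1 = Q ** A ** Q"
      unfolding A_def by (simp add: matrix_sub_ldistrib3 matrix_sub_rdistrib3 QQ)
    then have "det ((U + outer n a) ** (U + outer a n) - mat 1) = 0"
      unfolding C1 by (simp add: det_mul dA)
    then show ?thesis using detg[of 1] by simp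
  qed
  show "det ((U + f *\<^sub>R outer n a) ** (U + f *\<^sub>R outer a n) - mat 1) = 0"
    using detg[of f] K0 by simp
  have detF: "det (U + g *\<^sub>R outer a n) = det U + g * (a \<bullet> (cof U *v n))" for g
    using det_rank1[of U "g *\<^sub>R a" n] by (simp add: outer_lin)
  have "det (U + outer a n) = det U"
    unfolding tw[symmetric] using dQ dR by (simp add: det_mul)
  then have acn: "a \<bullet> (cof U *v n) = 0" using detF[of 1] by simp
  show dF: "det (U + f *\<^sub>R outer a n) > 0" using detF[of f] acn Uf(2) by simp
  have detC: "det ((U + f *\<^sub>R outer n a) ** (U + f *\<^sub>R outer a n)) = det (U ** U)"
  proof -
    have "det ((U + f *\<^sub>R outer n a) ** (U + f *\<^sub>R outer a n)) =
          det (transpose (U + f *\<^sub>R outer a n) ** (U + f *\<^sub>R outer a n))" by (simp only: trF)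
    also have "\<dots> = det (U + f *\<^sub>R outer a n) * det (U + f *\<^sub>R outer a n)" by (simp add: det_mul)
    also have "\<dots> = det U * det U" using detF[of f] acn by simp
    finally show ?thesis by (simp add: det_mul)
  qed
  have trg: "trace ((U + g *\<^sub>R outer n a) ** (U + g *\<^sub>R outer a n)) =
      trace (U ** U) + g * (2 * (w \<bullet> n)) + g^2 * ((a \<bullet> a) * (n \<bullet> n))" for g
  proof -
    have "(U + g *\<^sub>R outer n a) ** (U + g *\<^sub>R outer a n) =
       U ** U + g *\<^sub>R (outer (U *v a) n + outer n (U *v a)) + (g^2 * (a \<bullet> a)) *\<^sub>R outer n n"
      using C_expand[OF Uf(1), of g n a] by (simp add: algebra_simps)
    then show ?thesis unfolding w_def
      by (simp add: trace_add trace_scaleR trace_outer inner_commute algebra_simps)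
  qed
  have "trace ((U + outer n a) ** (U + outer a n)) = trace (U ** U)"
  proof -
    have "trace (Q ** (U ** U) ** Q) = trace (Q ** ((U ** U) ** Q))" by (simp add: matrix_mul_assoc)
    also have "\<dots> = trace (((U ** U) ** Q) ** Q)" by (rule trace_mul_sym)
    also have "\<dots> = trace (U ** U)" by (simp add: QQ matrix_mul_assoc[symmetric])
    finally show ?thesis unfolding C1 .
  qed
  then have wn: "2 * (w \<bullet> n) = - ((a \<bullet> a) * (n \<bullet> n))" using trg[of 1] by simp
  assume f: "f \<noteq> 1/2"
  have aa: "a \<bullet> a > 0" and nn: "n \<bullet> n > 0" using a0 n0 by auto
  have "0 < (a \<bullet> a) * (n \<bullet> n) * (f - 1/2)^2" using aa nn f by simp
  moreover have "(norm a)\<^sup>2 = a \<bullet> a" "(norm n)\<^sup>2 = n \<bullet> n" by (simp_all add: power2_norm_eq_inner)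
  ultimately show "trace ((U + f *\<^sub>R outer n a) ** (U + f *\<^sub>R outer a n))
           - det ((U + f *\<^sub>R outer n a) ** (U + f *\<^sub>R outer a n)) - 2 > 0"
    using CC3 unfolding trg detC wn by (simp add: algebra_simps power2_eq_square)
qed



lemma mid_scalar: fixes x mu z :: real
  assumes "x \<le> mu" "mu \<le> z" "(x-1)*(mu-1)*(z-1) = 0" "x + mu + z - x*mu*z - 2 > 0"
  shows "mu = 1 \<and> x < 1 \<and> 1 < z"
proof -
  have "x \<noteq> 1"
  proof
    assume x: "x = 1"
    then have "0 \<le> (mu - 1) * (z - 1)" using assms by simp
    moreover have "x + mu + z - x*mu*z - 2 = - ((mu - 1) * (z - 1))" using x by (simp add: algebra_simps)
    ultimately show False using assms(4) by linarith
  qed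
  moreover have "z \<noteq> 1"
  proof
    assume z: "z = 1"
    then have "0 \<le> (1 - x) * (1 - mu)" using assms by simp
    moreover have "x + mu + z - x*mu*z - 2 = - ((1 - x) * (1 - mu))" using z by (simp add: algebra_simps)
    ultimately show False using assms(4) by linarith
  qed
  ultimately have mu: "mu = 1" using assms(3) by simp
  then have "0 < (1 - x) * (z - 1)" using assms(4) by (simp add: algebra_simps)
  then have "x < 1 \<and> 1 < z \<or> x > 1 \<and> z < 1" by (simp add: zero_less_mult_iff)
  then show ?thesis using mu assms(1,2) by auto
qed

lemma cross_orthon: assumes "norm v1 = 1" "norm v3 = 1" "v1 \<bullet> v3 = 0"
  shows "orthon v1 (cross3 v3 v1) v3"
proof -
  have "(norm (cross3 v3 v1))\<^sup>2 + (v3 \<bullet> v1)\<^sup>2 = (norm v3 * norm v1)\<^sup>2" by (rule norm_cross_dot)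
  then have "(norm (cross3 v3 v1))\<^sup>2 = 1" using assms by (simp add: inner_commute)
  then have "norm (cross3 v3 v1) = 1" using norm_ge_zero[of "cross3 v3 v1"] by (auto simp: power2_eq_1_iff)
  then show ?thesis using assms unfolding orthon_def norm_eq_1
    by (simp add: dot_cross_self)
qed


theorem corollary2:
  fixes U R_hat :: "real^3^3" and e a n :: "real^3"
  assumes U: "pos_def_sym U"
    and e: "norm e = 1"
    and R_hat: "R_hat \<in> SO3"
    and a0: "a \<noteq> 0" and n0: "n \<noteq> 0"
    and twin: "R_hat ** ((- mat 1 + 2 *\<^sub>R outer e e) ** U ** (- mat 1 + 2 *\<^sub>R outer e e))
               = U + outer a n"
    and CC1: "middle_eigenvalue U 1"
    and CC2: "a \<bullet> ((U ** cof (U ** U - mat 1)) *v n) = 0"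
    and CC3: "trace (U ** U) - det (U ** U) - (norm a)\<^sup>2 * (norm n)\<^sup>2 / 4 - 2 \<ge> 0"
  shows "\<forall>f \<in> {0..1}. f \<noteq> 1/2 \<longrightarrow>
     (let C = (U + f *\<^sub>R outer n a) ** (U + f *\<^sub>R outer a n);
          F = f *\<^sub>R (U + outer a n) + (1 - f) *\<^sub>R U
      in \<forall>l1 l3 v1 v3 rho.
        l1 > 0 \<longrightarrow> l3 > 0 \<longrightarrow>
        norm v1 = 1 \<longrightarrow> norm v3 = 1 \<longrightarrow> v1 \<bullet> v3 = 0 \<longrightarrow>
        C *v v1 = l1\<^sup>2 *\<^sub>R v1 \<longrightarrow> C *v v3 = l3\<^sup>2 *\<^sub>R v3 \<longrightarrow>
        (\<forall>mu x. x \<noteq> 0 \<longrightarrow> C *v x = mu *\<^sub>R x \<longrightarrow> l1\<^sup>2 \<le> mu \<and> mu \<le> l3\<^sup>2) \<longrightarrow>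
        rho \<noteq> 0 \<longrightarrow>
        (let b = (\<lambda>\<kappa>::real. (rho / sqrt (l3\<^sup>2 - l1\<^sup>2)) *\<^sub>R
                    ((l3 * sqrt (1 - l1\<^sup>2)) *\<^sub>R v1 + (\<kappa> * l1 * sqrt (l3\<^sup>2 - 1)) *\<^sub>R v3));
             m = (\<lambda>\<kappa>::real. ((1 / rho) * (l3 - l1) / sqrt (l3\<^sup>2 - l1\<^sup>2)) *\<^sub>R
                    ((- sqrt (1 - l1\<^sup>2)) *\<^sub>R v1 + (\<kappa> * sqrt (l3\<^sup>2 - 1)) *\<^sub>R v3));
             S = {(R, B). R \<in> SO3 \<and> (\<exists>bb mm. B = outer bb mm) \<and> R ** F - mat 1 = B}
         in middle_eigenvalue C 1 \<and> l1\<^sup>2 \<le> 1 \<and> 1 \<le> l3\<^sup>2 \<and>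
            card S = 2 \<and> snd ` S = {outer (b \<kappa>) (m \<kappa>) | \<kappa>. \<kappa> \<in> {1, -1}}))"
  proof (intro ballI impI)
  fix f :: real assume f01: "f \<in> {0..1}" and fh: "f \<noteq> 1/2"
  note CA = C_analysis[OF U e R_hat a0 n0 twin CC1 CC2 CC3, where f=f]
  define Fm where "Fm = U + f *\<^sub>R outer a n"
  define C where "C = (U + f *\<^sub>R outer n a) ** (U + f *\<^sub>R outer a n)"
  have Feq: "f *\<^sub>R (U + outer a n) + (1 - f) *\<^sub>R U = Fm"
    unfolding Fm_def by (simp add: algebra_simps)
  have CF: "transpose Fm ** Fm = C" unfolding Fm_def C_def CA(4) ..
  have Ct: "transpose C = C" unfolding CF[symmetric] by (simp add: matrix_transpose_mul)
  have dC: "det (C - mat 1) = 0" unfolding C_def by (rule CA(1))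
  have gC: "trace C - det C - 2 > 0" unfolding C_def by (rule CA(2)[OF fh])
  have dF: "det Fm > 0" unfolding Fm_def by (rule CA(3))
  show "let C = (U + f *\<^sub>R outer n a) ** (U + f *\<^sub>R outer a n);
          F = f *\<^sub>R (U + outer a n) + (1 - f) *\<^sub>R U
      in \<forall>l1 l3 v1 v3 rho.
        l1 > 0 \<longrightarrow> l3 > 0 \<longrightarrow>
        norm v1 = 1 \<longrightarrow> norm v3 = 1 \<longrightarrow> v1 \<bullet> v3 = 0 \<longrightarrow>
        C *v v1 = l1\<^sup>2 *\<^sub>R v1 \<longrightarrow> C *v v3 = l3\<^sup>2 *\<^sub>R v3 \<longrightarrow>
        (\<forall>mu x. x \<noteq> 0 \<longrightarrow> C *v x = mu *\<^sub>R x \<longrightarrow> l1\<^sup>2 \<le> mu \<and> mu \<le> l3\<^sup>2) \<longrightarrow>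
        rho \<noteq> 0 \<longrightarrow>
        (let b = (\<lambda>\<kappa>::real. (rho / sqrt (l3\<^sup>2 - l1\<^sup>2)) *\<^sub>R
                    ((l3 * sqrt (1 - l1\<^sup>2)) *\<^sub>R v1 + (\<kappa> * l1 * sqrt (l3\<^sup>2 - 1)) *\<^sub>R v3));
             m = (\<lambda>\<kappa>::real. ((1 / rho) * (l3 - l1) / sqrt (l3\<^sup>2 - l1\<^sup>2)) *\<^sub>R
                    ((- sqrt (1 - l1\<^sup>2)) *\<^sub>R v1 + (\<kappa> * sqrt (l3\<^sup>2 - 1)) *\<^sub>R v3));
             S = {(R, B). R \<in> SO3 \<and> (\<exists>bb mm. B = outer bb mm) \<and> R ** F - mat 1 = B}
         in middle_eigenvalue C 1 \<and> l1\<^sup>2 \<le> 1 \<and> 1 \<le> l3\<^sup>2 \<and>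
            card S = 2 \<and> snd ` S = {outer (b \<kappa>) (m \<kappa>) | \<kappa>. \<kappa> \<in> {1, -1}})"
    unfolding Let_def Feq C_def[symmetric]
  proof (intro allI impI)
    fix l1 l3 :: real and v1 v3 :: "real^3" and rho :: real
    assume l10: "l1 > 0" and l30: "l3 > 0" and nv1: "norm v1 = 1" and nv3: "norm v3 = 1"
      and o13: "v1 \<bullet> v3 = 0" and ev1: "C *v v1 = l1\<^sup>2 *\<^sub>R v1" and ev3: "C *v v3 = l3\<^sup>2 *\<^sub>R v3"
      and bnd: "\<forall>mu x. x \<noteq> 0 \<longrightarrow> C *v x = mu *\<^sub>R x \<longrightarrow> l1\<^sup>2 \<le> mu \<and> mu \<le> l3\<^sup>2"
      and rho: "rho \<noteq> 0"
    define v2 where "v2 = cross3 v3 v1"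
    have o: "orthon v1 v2 v3" unfolding v2_def by (rule cross_orthon[OF nv1 nv3 o13])
    note oc = orthon_comm[OF o]
    define mu where "mu = v2 \<bullet> (C *v v2)"
    have ev2: "C *v v2 = mu *\<^sub>R v2"
    proof -
      have c1: "(C *v v2) \<bullet> v1 = 0"
        using inner_transpose[of v2 C v1] Ct ev1 oc by (simp add: inner_commute)
      have c3: "(C *v v2) \<bullet> v3 = 0"
        using inner_transpose[of v2 C v3] Ct ev3 oc by (simp add: inner_commute)
      show ?thesis using frame_expand[OF o, of "C *v v2"] c1 c3 unfolding mu_def
        by (simp add: inner_commute)
    qed
    have v2n: "v2 \<noteq> 0" using oc by auto
    have mub: "l1\<^sup>2 \<le> mu" "mu \<le> l3\<^sup>2" using bnd v2n ev2 by auto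
    have "det (C - mat 1) = (l1\<^sup>2 - 1) * (mu - 1) * (l3\<^sup>2 - 1)"
      by (rule eig_det_trace(1)[OF o eig_shift[OF ev1] eig_shift[OF ev2] eig_shift[OF ev3]])
    then have d0: "(l1\<^sup>2 - 1) * (mu - 1) * (l3\<^sup>2 - 1) = 0" using dC by simp
    have "det C = l1\<^sup>2 * mu * l3\<^sup>2" "trace C = l1\<^sup>2 + mu + l3\<^sup>2"
      using eig_det_trace[OF o ev1 ev2 ev3] by auto
    then have g0: "l1\<^sup>2 + mu + l3\<^sup>2 - l1\<^sup>2 * mu * l3\<^sup>2 - 2 > 0" using gC by simp
    have ms: "mu = 1 \<and> l1\<^sup>2 < 1 \<and> 1 < l3\<^sup>2" by (rule mid_scalar[OF mub d0 g0])
    have l1: "l1 < 1"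
    proof (rule ccontr)
      assume "\<not> l1 < 1" then have "1 \<le> l1" by simp
      then have "1 \<le> l1\<^sup>2" by (simp add: one_le_power)
      then show False using ms by simp
    qed
    have l3: "1 < l3"
    proof (rule ccontr)
      assume "\<not> 1 < l3" then have "l3 \<le> 1" by simp
      then have "l3\<^sup>2 \<le> 1" using l30 by (simp add: power_le_one)
      then show False using ms by simp
    qed
    have ev2': "C *v v2 = v2" using ev2 ms by simp
    have mid: "middle_eigenvalue C 1" unfolding middle_eigenvalue_def
      using nv1 nv3 oc ev1 ev2' ev3 ms o unfolding orthon_def norm_eq_1
      by (intro exI[of _ v1] exI[of _ v2] exI[of _ v3] exI[of _ "l1\<^sup>2"] exI[of _ "l3\<^sup>2"]) auto
    define B where "B = (\<lambda>k. outer (bf rho l1 l3 v1 v3 k) (mf rho l1 l3 v1 v3 k))"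
    have lst: "0 < l1" "l1 < 1" "1 < l3" using l10 l1 l3 by auto
    obtain R1 where R1: "R1 \<in> SO3" "R1 ** Fm - mat 1 = B 1"
      using BJ_setup[OF o CF ev1 ev2' ev3 lst dF rho, of 1] unfolding B_def by auto
    obtain R2 where R2: "R2 \<in> SO3" "R2 ** Fm - mat 1 = B (-1)"
      using BJ_setup[OF o CF ev1 ev2' ev3 lst dF rho, of "-1"] unfolding B_def by auto
    have Bne: "B 1 \<noteq> B (-1)" unfolding B_def by (rule BJ_distinct[OF o lst rho])
    have "invertible Fm" using dF by (simp add: invertible_det_nz)
    then obtain Fi where Fi: "Fm ** Fi = mat 1" unfolding invertible_def by blast
    have Rdet: "R = R'" if "R ** Fm - mat 1 = R' ** Fm - mat 1" for R R'
    proof -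
      have "R ** Fm = R' ** Fm" using that by simp
      then have "R ** Fm ** Fi = R' ** Fm ** Fi" by simp
      then show ?thesis by (simp add: matrix_mul_assoc[symmetric] Fi)
    qed
    define S where "S = {(R, B). R \<in> SO3 \<and> (\<exists>bb mm. B = outer bb mm) \<and> R ** Fm - mat 1 = B}"
    have SS: "S = {(R1, B 1), (R2, B (-1))}"
    proof
      show "S \<subseteq> {(R1, B 1), (R2, B (-1))}"
      proof
        fix z assume "z \<in> S"
        then obtain R bb mm where z: "z = (R, outer bb mm)" and R: "R \<in> SO3" and RB: "R ** Fm - mat 1 = outer bb mm"
          unfolding S_def by auto
        obtain k where k: "k = 1 \<or> k = -1" and kB: "outer bb mm = B k"
          using BJ_unique[OF o CF ev1 ev2' ev3 lst dF rho R RB] unfolding B_def by auto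
        show "z \<in> {(R1, B 1), (R2, B (-1))}"
          using k
        proof
          assume "k = 1" then show ?thesis using z kB RB R1 Rdet[of R R1] by auto
        next
          assume "k = -1" then show ?thesis using z kB RB R2 Rdet[of R R2] by auto
        qed
      qed
      show "{(R1, B 1), (R2, B (-1))} \<subseteq> S"
        using R1 R2 unfolding S_def B_def by auto
    qed
    have bfe: "(\<lambda>\<kappa>::real. (rho / sqrt (l3\<^sup>2 - l1\<^sup>2)) *\<^sub>R
                    ((l3 * sqrt (1 - l1\<^sup>2)) *\<^sub>R v1 + (\<kappa> * l1 * sqrt (l3\<^sup>2 - 1)) *\<^sub>R v3)) = bf rho l1 l3 v1 v3"
      by (rule ext) (simp add: bf_def)
    have mfe: "(\<lambda>\<kappa>::real. ((1 / rho) * (l3 - l1) / sqrt (l3\<^sup>2 - l1\<^sup>2)) *\<^sub>R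
                    ((- sqrt (1 - l1\<^sup>2)) *\<^sub>R v1 + (\<kappa> * sqrt (l3\<^sup>2 - 1)) *\<^sub>R v3)) = mf rho l1 l3 v1 v3"
      by (rule ext) (simp add: mf_def)
    have card2: "card S = 2" unfolding SS using Bne by simp
    have snd2: "snd ` S = {outer (bf rho l1 l3 v1 v3 \<kappa>) (mf rho l1 l3 v1 v3 \<kappa>) | \<kappa>. \<kappa> \<in> {1, -1}}"
      unfolding SS B_def by auto
    show "middle_eigenvalue C 1 \<and> l1\<^sup>2 \<le> 1 \<and> 1 \<le> l3\<^sup>2 \<and>
       card {(R, B). R \<in> SO3 \<and> (\<exists>bb mm. B = outer bb mm) \<and> R ** Fm - mat 1 = B} = 2 \<and>
       snd ` {(R, B). R \<in> SO3 \<and> (\<exists>bb mm. B = outer bb mm) \<and> R ** Fm - mat 1 = B} =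
       {outer ((\<lambda>\<kappa>::real. (rho / sqrt (l3\<^sup>2 - l1\<^sup>2)) *\<^sub>R
                    ((l3 * sqrt (1 - l1\<^sup>2)) *\<^sub>R v1 + (\<kappa> * l1 * sqrt (l3\<^sup>2 - 1)) *\<^sub>R v3)) \<kappa>)
              ((\<lambda>\<kappa>::real. ((1 / rho) * (l3 - l1) / sqrt (l3\<^sup>2 - l1\<^sup>2)) *\<^sub>R
                    ((- sqrt (1 - l1\<^sup>2)) *\<^sub>R v1 + (\<kappa> * sqrt (l3\<^sup>2 - 1)) *\<^sub>R v3)) \<kappa>) | \<kappa>. \<kappa> \<in> {1, -1}}"
      unfolding S_def[symmetric] using mid ms card2 snd2 unfolding bf_def mf_def by simp
  qed
qed

end
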